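(* If $G=\prod_{i=1}^tK[a_i,b_i]$ with $2\le b_1\le\cdots\le b_t$, then $$\mathrm{IR}(G)\le\frac1{b_1}\prod_{i=1}^ta_ib_i+\frac2{b_t}\prod_{i=1}^tb_i.$$
   Context: $K[a,b]$ is the balanced complete $b$-partite graph with $b$ parts of size $a$ (vertices adjacent iff in different parts); $\prod$ denotes the direct product of graphs ($(g_1,h_1)\sim(g_2,h_2)$ iff $g_1\sim g_2$ and $h_1\sim h_2$). A set $S$ is irredundant if every $v\in S$ has a private neighbor, i.e. a vertex in $N[v]\setminus N[S\setminus\{v\}]$ (closed neighborhoods). $\mathrm{IR}(G)$ is the maximum size of an irredundant set. *)

theory Defs
  imports Complex_Main "HOL-Library.FuncSet"
begin

text \<open>A graph is given by a vertex set V and a symmetric adjacency relation E.\<close>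

definition cnbhd :: "'v set \<Rightarrow> ('v \<Rightarrow> 'v \<Rightarrow> bool) \<Rightarrow> 'v \<Rightarrow> 'v set" where
  "cnbhd V E v = {u \<in> V. u = v \<or> E v u}"

definition cnbhd_set :: "'v set \<Rightarrow> ('v \<Rightarrow> 'v \<Rightarrow> bool) \<Rightarrow> 'v set \<Rightarrow> 'v set" where
  "cnbhd_set V E S = (\<Union>w\<in>S. cnbhd V E w)"

definition irredundant :: "'v set \<Rightarrow> ('v \<Rightarrow> 'v \<Rightarrow> bool) \<Rightarrow> 'v set \<Rightarrow> bool" where
  "irredundant V E S \<longleftrightarrow> S \<subseteq> V \<and>
     (\<forall>v\<in>S. \<exists>u. u \<in> cnbhd V E v - cnbhd_set V E (S - {v}))"

text \<open>Upper irredundance number (for finite graphs; Max over all irredundant sets).\<close>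
definition IR :: "'v set \<Rightarrow> ('v \<Rightarrow> 'v \<Rightarrow> bool) \<Rightarrow> nat" where
  "IR V E = Max (card ` {S. irredundant V E S})"

text \<open>Balanced complete b-partite graph K[a,b]: vertex (p,k) is the k-th vertex of part p.\<close>
definition K_verts :: "nat \<Rightarrow> nat \<Rightarrow> (nat \<times> nat) set" where
  "K_verts a b = {0..<b} \<times> {0..<a}"

definition K_adj :: "(nat \<times> nat) \<Rightarrow> (nat \<times> nat) \<Rightarrow> bool" where
  "K_adj x y \<longleftrightarrow> fst x \<noteq> fst y"

definition dprod_verts :: "nat \<Rightarrow> (nat \<Rightarrow> 'v set) \<Rightarrow> (nat \<Rightarrow> 'v) set" where
  "dprod_verts t V = PiE {..<t} V"

definition dprod_adj :: "nat \<Rightarrow> (nat \<Rightarrow> 'v \<Rightarrow> 'v \<Rightarrow> bool) \<Rightarrow> (nat \<Rightarrow> 'v) \<Rightarrow> (nat \<Rightarrow> 'v) \<Rightarrow> bool" where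
  "dprod_adj t E x y \<longleftrightarrow> (\<forall>i<t. E i (x i) (y i))"

end

theory Submission
  imports Defs
begin

lemma card_le2:
  assumes "finite A"
    and "\<And>x y z. x\<in>A \<Longrightarrow> y\<in>A \<Longrightarrow> z\<in>A \<Longrightarrow> x\<noteq>y \<Longrightarrow> x\<noteq>z \<Longrightarrow> y\<noteq>z \<Longrightarrow> False"
  shows "card A \<le> 2"
proof (rule ccontr)
  assume "\<not> card A \<le> 2"
  then have "3 \<le> card A" by simp
  then obtain B where B: "B \<subseteq> A" "card B = 3" using obtain_subset_with_card_n by metis
  then obtain x y z where "B = {x,y,z}" "x\<noteq>y" "y\<noteq>z" "x\<noteq>z" by (auto simp: card_3_iff)
  then show False using assms(2)[of x y z] B by auto
qed

lemma modeq1: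
  fixes p q r m :: int
  assumes "(p - r) mod m = (q - r) mod m" "\<bar>p - q\<bar> < m"
  shows "p = q"
proof -
  have "m dvd (p - r) - (q - r)" using assms(1) by (simp add: mod_eq_dvd_iff)
  then have "m dvd p - q" by simp
  then show ?thesis using dvd_imp_le_int[of "p - q" m] assms(2) by (cases "p - q = 0") auto
qed

lemma modeq2:
  fixes p q r m :: int
  assumes "(r - p) mod m = (r - q) mod m" "\<bar>p - q\<bar> < m"
  shows "p = q"
proof -
  have "m dvd (r - p) - (r - q)" using assms(1) by (simp add: mod_eq_dvd_iff)
  then have "m dvd q - p" by simp
  then show ?thesis using dvd_imp_le_int[of "q - p" m] assms(2) by (cases "q - p = 0") auto
qed

theorem theorem5p4:
  fixes t :: nat and a b :: "nat \<Rightarrow> nat"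
  assumes "t \<ge> 1"
    and "2 \<le> b 0"
    and "\<And>i j. i \<le> j \<Longrightarrow> j < t \<Longrightarrow> b i \<le> b j"
  shows "real (IR (dprod_verts t (\<lambda>i. K_verts (a i) (b i))) (dprod_adj t (\<lambda>i. K_adj)))
         \<le> (\<Prod>i<t. real (a i * b i)) / real (b 0) + 2 * (\<Prod>i<t. real (b i)) / real (b (t - 1))"
proof -
  define V where "V = dprod_verts t (\<lambda>i. K_verts (a i) (b i))"
  define E where "E = dprod_adj t (\<lambda>i. K_adj)"
  have Vd: "V = PiE {..<t} (\<lambda>i. {0..<b i} \<times> {0..<a i})"
    by (simp add: V_def dprod_verts_def K_verts_def)
  have Ed: "\<And>x y. E x y \<longleftrightarrow> (\<forall>i<t. fst (x i) \<noteq> fst (y i))"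
    by (simp add: E_def dprod_adj_def K_adj_def)
  have finV: "finite V" by (simp add: Vd finite_PiE)
  have fin: "finite {S. irredundant V E S}"
    by (rule finite_subset[of _ "Pow V"]) (auto simp: irredundant_def finV)
  have ne: "{} \<in> {S. irredundant V E S}" by (simp add: irredundant_def)
  have "IR V E \<in> card ` {S. irredundant V E S}"
    unfolding IR_def using fin ne by (intro Max_in) auto
  then obtain S where S: "irredundant V E S" "card S = IR V E" by auto
  have SV: "S \<subseteq> V" using S by (simp add: irredundant_def)
  have finS: "finite S" using SV finV finite_subset by blast
  have priv: "\<exists>u. u \<in> V \<and> (u = v \<or> E v u) \<and> (\<forall>w\<in>S-{v}. \<not>(u = w \<or> E w u))"
    if "v \<in> S" for v
  proof -
    have "\<exists>u. u \<in> cnbhd V E v - cnbhd_set V E (S - {v})"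
      using S(1) that by (simp add: irredundant_def)
    then obtain u where u: "u \<in> cnbhd V E v" "u \<notin> cnbhd_set V E (S - {v})" by blast
    have u1: "u \<in> V" "u = v \<or> E v u" using u(1) by (simp_all add: cnbhd_def)
    have u2: "\<not>(u = w \<or> E w u)" if w: "w \<in> S - {v}" for w
    proof
      assume "u = w \<or> E w u"
      then have "u \<in> cnbhd V E w" using u1(1) by (simp add: cnbhd_def)
      then have "u \<in> cnbhd_set V E (S - {v})" using w unfolding cnbhd_set_def by blast
      then show False using u(2) by contradiction
    qed
    show ?thesis using u1 u2 by blast
  qed
  have b0: "\<And>i. i < t \<Longrightarrow> b 0 \<le> b i" using assms(3)[of 0] by blast
  have bpos: "\<And>i. i < t \<Longrightarrow> 0 < b i" using b0 assms(2) by (metis le_trans not_less zero_less_numeral order.strict_trans2)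
  define S1 where "S1 = {v\<in>S. \<forall>w\<in>S. \<not> E v w}"
  define S2 where "S2 = S - S1"
  have cardS: "card S = card S1 + card S2"
    unfolding S2_def using finS card_Diff_subset[of S1 S] card_mono[of S S1]
    by (simp add: S1_def)
  define F where "F = (\<lambda>x::nat \<Rightarrow> nat \<times> nat. \<lambda>i\<in>{..<t}. (nat ((int (fst (x i)) - int (fst (x 0))) mod int (b i)), snd (x i)))"
  define V' where "V' = PiE {..<t} (\<lambda>i. if i = 0 then {0}\<times>{0..<a 0} else {0..<b i}\<times>{0..<a i})"
  have FV: "F ` S1 \<subseteq> V'"
  proof
    fix y assume "y \<in> F ` S1"
    then obtain x where x: "x \<in> S1" "y = F x" by auto
    have xV: "x \<in> V" using x SV S1_def by auto
    show "y \<in> V'" unfolding V'_def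
    proof (rule PiE_I)
      fix i assume i: "i \<in> {..<t}"
      have "x i \<in> {0..<b i} \<times> {0..<a i}" using xV i Vd by auto
      moreover have "(int (fst (x i)) - int (fst (x 0))) mod int (b i) < int (b i)"
        using bpos i by simp
      moreover have "0 \<le> (int (fst (x i)) - int (fst (x 0))) mod int (b i)"
        using bpos i by simp
      ultimately show "y i \<in> (if i = 0 then {0}\<times>{0..<a 0} else {0..<b i}\<times>{0..<a i})"
        using i x(2) unfolding F_def by (auto simp: nat_less_iff)
    next
      fix i assume "i \<notin> {..<t}" then show "y i = undefined" using x(2) F_def by auto
    qed
  qed
  have injF: "inj_on F S1"
  proof
    fix x y assume x: "x \<in> S1" and y: "y \<in> S1" and eq: "F x = F y"
    have xV: "x \<in> V" and yV: "y \<in> V" using x y SV S1_def by auto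
    have ranx: "\<And>i. i < t \<Longrightarrow> fst (x i) < b i" using xV Vd by (auto simp: PiE_iff mem_Times_iff)
    have rany: "\<And>i. i < t \<Longrightarrow> fst (y i) < b i" using yV Vd by (auto simp: PiE_iff mem_Times_iff)
    have t0: "0 < t" using assms(1) by simp
    have comp: "(int (fst (x i)) - int (fst (x 0))) mod int (b i) = (int (fst (y i)) - int (fst (y 0))) mod int (b i)
         \<and> snd (x i) = snd (y i)" if i: "i < t" for i
    proof -
      have "F x i = F y i" using eq by simp
      then have "nat ((int (fst (x i)) - int (fst (x 0))) mod int (b i)) = nat ((int (fst (y i)) - int (fst (y 0))) mod int (b i))
         \<and> snd (x i) = snd (y i)" using i by (simp add: F_def)
      moreover have "0 \<le> (int (fst (x i)) - int (fst (x 0))) mod int (b i)" "0 \<le> (int (fst (y i)) - int (fst (y 0))) mod int (b i)"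
        using bpos i by simp_all
      ultimately show ?thesis by (metis eq_nat_nat_iff)
    qed
    show "x = y"
    proof (cases "fst (x 0) = fst (y 0)")
      case True
      have "x i = y i" if i: "i < t" for i
      proof -
        have "int (fst (x i)) = int (fst (y i))"
          apply (rule modeq1[of _ "int (fst (x 0))" "int (b i)"])
          using comp[OF i] True ranx[OF i] rany[OF i] by auto
        then show ?thesis using comp[OF i] by (simp add: prod_eq_iff)
      qed
      then show ?thesis using xV yV Vd by (auto simp: PiE_iff fun_eq_iff extensional_def) (metis not_less)
    next
      case False
      have "E x y" unfolding Ed
      proof (intro allI impI)
        fix i assume i: "i < t"
        show "fst (x i) \<noteq> fst (y i)"
        proof
          assume h: "fst (x i) = fst (y i)"
          have "int (fst (x 0)) = int (fst (y 0))"
            apply (rule modeq2[of "int (fst (x i))" _ "int (b i)"])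
            using comp[OF i] h ranx[OF t0] rany[OF t0] b0[OF i] by auto
          then show False using False by simp
        qed
      qed
      then show ?thesis using x y S1_def by auto
    qed
  qed
  have finV': "finite V'" by (simp add: V'_def finite_PiE)
  have c1: "card S1 \<le> card V'" using card_inj_on_le[OF injF FV finV'] .
  define G where "G = (\<lambda>x::nat \<Rightarrow> nat \<times> nat. \<lambda>i\<in>{..<t}. if i = t - 1 then 0 else fst (x i))"
  define W where "W = PiE {..<t} (\<lambda>i. if i = t - 1 then {0::nat} else {0..<b i})"
  have GW: "G ` S2 \<subseteq> W"
  proof
    fix y assume "y \<in> G ` S2"
    then obtain x where x: "x \<in> S2" "y = G x" by auto
    have xV: "x \<in> V" using x SV S2_def by auto
    then show "y \<in> W" using x Vd unfolding W_def G_def by (auto simp: PiE_iff mem_Times_iff)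
  qed
  have S2priv: "\<exists>u. E v u \<and> (\<forall>w\<in>S-{v}. \<not> E w u)" if v: "v \<in> S2" for v
  proof -
    obtain w where w: "w \<in> S" "E v w" using v S1_def S2_def by auto
    have wv: "w \<noteq> v" using w(2) assms(1) Ed by fastforce
    obtain u where u: "u \<in> V" "u = v \<or> E v u" "\<forall>w\<in>S-{v}. \<not>(u = w \<or> E w u)"
      using priv[of v] v S2_def by auto
    have "E w v" using w(2) Ed by metis
    then have "u \<noteq> v" using u(3) w wv by auto
    then show ?thesis using u by auto
  qed
  have fib: "card {x\<in>S2. G x = g} \<le> 2" for g
  proof (rule card_le2)
    show "finite {x \<in> S2. G x = g}" using finS S2_def by auto
  next
    fix x y z assume xyz: "x \<in> {x \<in> S2. G x = g}" "y \<in> {x \<in> S2. G x = g}" "z \<in> {x \<in> S2. G x = g}"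
      and d: "x \<noteq> y" "x \<noteq> z" "y \<noteq> z"
    have same: "fst (p i) = fst (q i)" if "p \<in> {x \<in> S2. G x = g}" "q \<in> {x \<in> S2. G x = g}" "i < t - 1" for p q i
    proof -
      have "G p i = G q i" using that by simp
      then show ?thesis using that unfolding G_def by (auto split: if_splits)
    qed
    obtain u where u: "E x u" "\<forall>w\<in>S-{x}. \<not> E w u" using S2priv xyz(1) by auto
    have last: "fst (w (t - 1)) = fst (u (t - 1))" if w: "w \<in> {x \<in> S2. G x = g}" "w \<noteq> x" for w
    proof -
      have "w \<in> S - {x}" using w S2_def by auto
      then have "\<not> E w u" using u by auto
      then obtain i where i: "i < t" "fst (w i) = fst (u i)" using Ed by auto
      show ?thesis
      proof (cases "i < t - 1")
        case True
        then have "fst (w i) = fst (x i)" using same[OF w(1) xyz(1)] by auto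
        then show ?thesis using u(1) i Ed by auto
      next
        case False
        then have "i = t - 1" using i by auto
        then show ?thesis using i by simp
      qed
    qed
    have yz: "fst (y i) = fst (z i)" if i: "i < t" for i
    proof (cases "i < t - 1")
      case True then show ?thesis using same[OF xyz(2) xyz(3)] by auto
    next
      case False
      then have "i = t - 1" using i by auto
      then show ?thesis using last[OF xyz(2)] last[OF xyz(3)] d by auto
    qed
    obtain u' where u': "E y u'" "\<forall>w\<in>S-{y}. \<not> E w u'" using S2priv xyz(2) by auto
    have "E z u'" using u'(1) yz Ed by auto
    moreover have "z \<in> S - {y}" using xyz d S2_def by auto
    ultimately show False using u'(2) by auto
  qed
  have c2: "card S2 \<le> 2 * card W"
  proof -
    have fS2: "finite S2" using finS S2_def by auto
    have "S2 = (\<Union>g\<in>G ` S2. {x\<in>S2. G x = g})" by auto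
    then have "card S2 = card (\<Union>g\<in>G ` S2. {x\<in>S2. G x = g})" by simp
    also have "\<dots> = (\<Sum>g\<in>G ` S2. card {x\<in>S2. G x = g})"
      using fS2 by (intro card_UN_disjoint) auto
    also have "\<dots> \<le> (\<Sum>g\<in>G ` S2. 2)" by (intro sum_mono fib)
    also have "\<dots> = 2 * card (G ` S2)" by simp
    also have "\<dots> \<le> 2 * card W"
      using GW by (intro mult_le_mono2 card_mono) (auto simp: W_def finite_PiE)
    finally show ?thesis .
  qed
  obtain m where tm: "t = Suc m" using assms(1) by (cases t) auto
  have cV': "card V' = a 0 * (\<Prod>i<m. b (Suc i) * a (Suc i))"
  proof -
    have "card V' = (\<Prod>i<t. card (if i = 0 then {0}\<times>{0..<a 0} else {0..<b i}\<times>{0..<a i}))"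
      unfolding V'_def by (simp add: card_PiE)
    also have "\<dots> = (\<Prod>i<t. if i = 0 then a 0 else b i * a i)"
      by (intro prod.cong) (auto simp: card_cartesian_product)
    also have "\<dots> = a 0 * (\<Prod>i<m. b (Suc i) * a (Suc i))"
      unfolding tm by (subst prod.lessThan_Suc_shift) simp
    finally show ?thesis .
  qed
  have cW: "card W = (\<Prod>i<m. b i)"
  proof -
    have "card W = (\<Prod>i<t. card (if i = t - 1 then {0::nat} else {0..<b i}))"
      unfolding W_def by (simp add: card_PiE)
    also have "\<dots> = (\<Prod>i<t. if i = m then 1 else b i)"
      by (intro prod.cong) (auto simp: tm)
    also have "\<dots> = (\<Prod>i<m. b i)"
      unfolding tm by (simp add: prod.lessThan_Suc)
    finally show ?thesis .
  qed
  have bm: "0 < b m" using bpos tm by simp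
  have b00: "0 < b 0" using assms(2) by simp
  have r1: "real (card V') = (\<Prod>i<t. real (a i * b i)) / real (b 0)"
  proof -
    have "(\<Prod>i<t. real (a i * b i)) = real (a 0 * b 0) * (\<Prod>i<m. real (a (Suc i) * b (Suc i)))"
      unfolding tm by (subst prod.lessThan_Suc_shift) simp
    then show ?thesis using b00 cV' by (simp add: field_simps mult.commute)
  qed
  have r2: "real (card W) = (\<Prod>i<t. real (b i)) / real (b (t - 1))"
    using bm cW by (simp add: tm prod.lessThan_Suc)
  have "real (IR V E) \<le> real (card V') + 2 * real (card W)"
    using S(2) cardS c1 c2 by linarith
  then show ?thesis using r1 r2 unfolding V_def E_def by (simp add: times_divide_eq_right)
qed

end
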